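(* For every integer $n\ge 7$ there exists a $2$-connected detour covered graph of order $n$ which is not cummerbund covered. For every integer $n\ge 12$ there exists a $2$-connected cummerbund covered graph of order $n$ which is not detour covered.
   Context: All graphs are finite and simple. A detour of a graph is a longest path in the graph, and a cummerbund is a longest cycle. A graph is detour covered if every vertex lies in some detour, and cummerbund covered if every vertex lies in some cummerbund. *)

theory Defs
  imports Main
begin

definition simple_graph :: "'a set \<Rightarrow> ('a \<Rightarrow> 'a \<Rightarrow> bool) \<Rightarrow> bool" where
  "simple_graph V E \<longleftrightarrow> finite V \<and> (\<forall>x y. E x y \<longrightarrow> x \<in> V \<and> y \<in> V)
     \<and> (\<forall>x y. E x y \<longrightarrow> E y x) \<and> (\<forall>x. \<not> E x x)"

definition induced :: "('a \<Rightarrow> 'a \<Rightarrow> bool) \<Rightarrow> 'a set \<Rightarrow> 'a \<Rightarrow> 'a \<Rightarrow> bool" where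
  "induced E S = (\<lambda>x y. E x y \<and> x \<in> S \<and> y \<in> S)"

definition connected_graph :: "'a set \<Rightarrow> ('a \<Rightarrow> 'a \<Rightarrow> bool) \<Rightarrow> bool" where
  "connected_graph V E \<longleftrightarrow> V \<noteq> {} \<and> (\<forall>u\<in>V. \<forall>v\<in>V. (induced E V)\<^sup>*\<^sup>* u v)"

definition k_connected :: "nat \<Rightarrow> 'a set \<Rightarrow> ('a \<Rightarrow> 'a \<Rightarrow> bool) \<Rightarrow> bool" where
  "k_connected k V E \<longleftrightarrow> card V > k \<and>
     (\<forall>X. X \<subseteq> V \<and> card X < k \<longrightarrow> connected_graph (V - X) (induced E (V - X)))"

text \<open>A path is a nonempty list of distinct vertices, consecutive ones adjacent.
  Its length (number of edges) is length xs - 1.\<close>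
definition is_path :: "'a set \<Rightarrow> ('a \<Rightarrow> 'a \<Rightarrow> bool) \<Rightarrow> 'a list \<Rightarrow> bool" where
  "is_path V E xs \<longleftrightarrow> xs \<noteq> [] \<and> distinct xs \<and> set xs \<subseteq> V \<and>
     (\<forall>i. Suc i < length xs \<longrightarrow> E (xs ! i) (xs ! Suc i))"

definition is_cycle :: "'a set \<Rightarrow> ('a \<Rightarrow> 'a \<Rightarrow> bool) \<Rightarrow> 'a list \<Rightarrow> bool" where
  "is_cycle V E xs \<longleftrightarrow> is_path V E xs \<and> length xs \<ge> 3 \<and> E (last xs) (hd xs)"

definition is_detour :: "'a set \<Rightarrow> ('a \<Rightarrow> 'a \<Rightarrow> bool) \<Rightarrow> 'a list \<Rightarrow> bool" where
  "is_detour V E xs \<longleftrightarrow> is_path V E xs \<and> (\<forall>ys. is_path V E ys \<longrightarrow> length ys \<le> length xs)"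

definition is_cummerbund :: "'a set \<Rightarrow> ('a \<Rightarrow> 'a \<Rightarrow> bool) \<Rightarrow> 'a list \<Rightarrow> bool" where
  "is_cummerbund V E xs \<longleftrightarrow> is_cycle V E xs \<and> (\<forall>ys. is_cycle V E ys \<longrightarrow> length ys \<le> length xs)"

definition detour_covered :: "'a set \<Rightarrow> ('a \<Rightarrow> 'a \<Rightarrow> bool) \<Rightarrow> bool" where
  "detour_covered V E \<longleftrightarrow> (\<forall>v\<in>V. \<exists>xs. is_detour V E xs \<and> v \<in> set xs)"

definition cummerbund_covered :: "'a set \<Rightarrow> ('a \<Rightarrow> 'a \<Rightarrow> bool) \<Rightarrow> bool" where
  "cummerbund_covered V E \<longleftrightarrow> (\<forall>v\<in>V. \<exists>xs. is_cummerbund V E xs \<and> v \<in> set xs)"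

end

theory Submission
  imports Defs
begin


lemma path_succ: "is_path V E xs \<longleftrightarrow> xs \<noteq> [] \<and> distinct xs \<and> set xs \<subseteq> V \<and> successively E xs"
  by (simp add: is_path_def successively_conv_nth)

lemma card_insert_le1: "finite B \<Longrightarrow> card (insert a B) \<le> card B + 1"
  by (simp add: card_insert_if)

lemma labels_path:
  assumes "successively E xs" "distinct xs"
    and pres: "\<And>x y. E x y \<Longrightarrow> x \<notin> S \<Longrightarrow> y \<notin> S \<Longrightarrow> f x = f y"
  shows "card (f ` (set xs - S)) + (if xs \<noteq> [] \<and> hd xs \<in> S then 1 else 0) \<le> card (set xs \<inter> S) + 1"
  using assms(1,2)
proof (induction xs)
  case Nil then show ?case by simp
next
  case (Cons x ys)
  have IH: "card (f ` (set ys - S)) + (if ys \<noteq> [] \<and> hd ys \<in> S then 1 else 0) \<le> card (set ys \<inter> S) + 1"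
    using Cons by (auto simp: successively_Cons)
  show ?case
  proof (cases "x \<in> S")
    case True
    have "set (x#ys) - S = set ys - S" using True by auto
    moreover have "card (set (x#ys) \<inter> S) = card (set ys \<inter> S) + 1" using True Cons.prems(2) by simp
    ultimately show ?thesis using IH True by (auto split: if_splits)
  next
    case False
    then have cS: "set (x#ys) \<inter> S = set ys \<inter> S" by auto
    show ?thesis
    proof (cases ys)
      case Nil
      then have "set (x#ys) - S = {x}" using False by auto
      then show ?thesis using False Nil by simp
    next
      case (Cons y zs)
      have Exy: "E x y" using Cons.prems(1) \<open>ys = y#zs\<close> by simp
      show ?thesis
      proof (cases "y \<in> S")
        case True
        have "f ` (set (x#ys) - S) = insert (f x) (f ` (set ys - S))" using False by auto
        hence "card (f ` (set (x#ys) - S)) \<le> card (f ` (set ys - S)) + 1"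
          by (metis card_insert_le1 finite_Diff finite_imageI finite_set)
        then show ?thesis using IH True False cS \<open>ys = y#zs\<close> by auto
      next
        case yn: False
        have "f x = f y" using pres[OF Exy False yn] .
        hence "f ` (set (x#ys) - S) = f ` (set ys - S)" using False yn \<open>ys = y#zs\<close> by auto
        then show ?thesis using IH False cS \<open>ys = y#zs\<close> by (auto split: if_splits)
      qed
    qed
  qed
qed

lemma labels_path':
  assumes "is_path V E xs"
    and pres: "\<And>x y. E x y \<Longrightarrow> x \<notin> S \<Longrightarrow> y \<notin> S \<Longrightarrow> f x = f y"
  shows "card (f ` (set xs - S)) \<le> card (set xs \<inter> S) + 1"
  using labels_path[of E xs S f] assms by (auto simp: path_succ)

lemma labels_cycle:
  assumes "is_cycle V E xs"
    and pres: "\<And>x y. E x y \<Longrightarrow> x \<notin> S \<Longrightarrow> y \<notin> S \<Longrightarrow> f x = f y"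
  shows "card (f ` (set xs - S)) \<le> max 1 (card (set xs \<inter> S))"
proof (cases "set xs \<inter> S = {}")
  case True
  then show ?thesis using labels_path'[of V E xs S f] assms by (auto simp: is_cycle_def)
next
  case False
  then obtain s where s: "s \<in> S" "s \<in> set xs" by auto
  obtain as bs where xs: "xs = as @ s # bs" using split_list[OF s(2)] by auto
  let ?ys = "(s # bs) @ as"
  have p: "successively E xs" "distinct xs" "E (last xs) (hd xs)"
    using assms(1) by (auto simp: is_cycle_def path_succ)
  have "successively E ?ys"
    using p(1,3) unfolding xs successively_append_iff by (cases as) (auto simp: successively_append_iff)
  moreover have "distinct ?ys" using p(2) xs by auto
  moreover have "set ?ys = set xs" using xs by auto
  ultimately have "card (f ` (set xs - S)) + 1 \<le> card (set xs \<inter> S) + 1"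
    using labels_path[of E ?ys S f] pres s by auto
  then show ?thesis by simp
qed

lemma size_bound:
  assumes "finite V" "set xs \<subseteq> V" "l0 \<in> f ` (set xs - S)"
   "\<And>l. l \<in> f ` (set xs - S) \<Longrightarrow> card {x\<in>V. x \<notin> S \<and> f x = l} \<le> k"
   "card {x\<in>V. x \<notin> S \<and> f x = l0} \<le> k0"
  shows "card (set xs - S) \<le> k0 + k * (card (f ` (set xs - S)) - 1)"
proof -
  let ?L = "f ` (set xs - S)"
  let ?c = "\<lambda>l. {x\<in>V. x \<notin> S \<and> f x = l}"
  have "set xs - S \<subseteq> (\<Union>l\<in>?L. ?c l)" using assms(2) by auto
  hence "card (set xs - S) \<le> card (\<Union>l\<in>?L. ?c l)" by (intro card_mono) (use assms(1) in auto)
  also have "\<dots> \<le> (\<Sum>l\<in>?L. card (?c l))" by (rule card_UN_le) simp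
  also have "\<dots> = card (?c l0) + (\<Sum>l\<in>?L - {l0}. card (?c l))" using assms(3) by (simp add: sum.remove)
  also have "\<dots> \<le> k0 + (\<Sum>l\<in>?L - {l0}. k)" using assms(4,5) by (intro add_mono sum_mono) auto
  also have "\<dots> = k0 + k * (card ?L - 1)" using assms(3) by simp
  finally show ?thesis .
qed

lemma len_split: "distinct xs \<Longrightarrow> length xs = card (set xs \<inter> S) + card (set xs - S)"
  by (metis card_Int_Diff distinct_card finite_set)

lemma succ_upt: "(\<And>i. a \<le> i \<Longrightarrow> Suc i < b \<Longrightarrow> R i (Suc i)) \<Longrightarrow> successively R [a..<b]"
  by (auto simp: successively_conv_nth)

lemma walk_reach:
  assumes "successively R ws" "\<And>x y. R x y \<Longrightarrow> R y x" "i < length ws" "j < length ws"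
  shows "R\<^sup>*\<^sup>* (ws ! i) (ws ! j)"
proof -
  have *: "R\<^sup>*\<^sup>* (ws ! i) (ws ! (i + d)) \<and> R\<^sup>*\<^sup>* (ws ! (i + d)) (ws ! i)" if "i + d < length ws" for i d
    using that
  proof (induction d)
    case 0 then show ?case by simp
  next
    case (Suc d)
    have r: "R (ws ! (i + d)) (ws ! Suc (i + d))" using successively_nth[OF assms(1)] Suc.prems by simp
    then have r': "R (ws ! Suc (i + d)) (ws ! (i + d))" using assms(2) by blast
    from Suc show ?case using r r'
      by (metis add_Suc_right rtranclp.rtrancl_into_rtrancl converse_rtranclp_into_rtranclp Suc_lessD)
  qed
  show ?thesis
  proof (cases "i \<le> j")
    case True then show ?thesis using *[of i "j - i"] assms(4) by simp
  next
    case False then show ?thesis using *[of j "i - j"] assms(3) by simp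
  qed
qed

lemma induced_idem: "induced (induced E W) W = induced E W"
  by (auto simp: induced_def fun_eq_iff)

lemma conn_star:
  assumes "successively (induced E W) ws" "set ws \<subseteq> W" "ws \<noteq> []" "\<And>x y. E x y \<Longrightarrow> E y x"
    and cov: "\<And>u. u \<in> W \<Longrightarrow> u \<in> set ws \<or> (\<exists>w\<in>set ws. E u w)"
  shows "connected_graph W (induced E W)"
proof -
  let ?R = "induced E W"
  have sym: "\<And>x y. ?R x y \<Longrightarrow> ?R y x" using assms(4) by (auto simp: induced_def)
  have inws: "?R\<^sup>*\<^sup>* x y" if "x \<in> set ws" "y \<in> set ws" for x y
    using walk_reach[OF assms(1) sym] that by (metis in_set_conv_nth)
  have toh: "?R\<^sup>*\<^sup>* u (hd ws) \<and> ?R\<^sup>*\<^sup>* (hd ws) u" if "u \<in> W" for u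
  proof -
    have h: "hd ws \<in> set ws" using assms(3) by simp
    from cov[OF that] show ?thesis
    proof
      assume "u \<in> set ws" then show ?thesis using inws h by blast
    next
      assume "\<exists>w\<in>set ws. E u w"
      then obtain w where w: "w \<in> set ws" "E u w" by blast
      have "?R u w" "?R w u" using w that assms(2,4) by (auto simp: induced_def)
      then show ?thesis using inws[OF w(1) h] inws[OF h w(1)]
        by (meson converse_rtranclp_into_rtranclp rtranclp.rtrancl_into_rtrancl)
    qed
  qed
  show ?thesis unfolding connected_graph_def induced_idem
    using toh assms(2,3) by (metis empty_iff list.set_sel(1) rtranclp_trans subsetD)
qed

lemma succ_induced: "successively E ws \<Longrightarrow> set ws \<subseteq> W \<Longrightarrow> successively (induced E W) ws"
  by (erule successively_mono) (auto simp: induced_def)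

lemma card_le_sub: "A \<subseteq> B \<Longrightarrow> card B \<le> k \<Longrightarrow> finite B \<Longrightarrow> card A \<le> k"
  by (meson card_mono le_trans)

lemma conn_gen:
  assumes "successively E ws" "set ws = W" "ws \<noteq> []" "\<And>x y. E x y \<Longrightarrow> E y x"
  shows "connected_graph W (induced E W)"
  by (rule conn_star[where ws=ws]) (use assms in \<open>auto intro: succ_induced\<close>)



definition E1 :: "nat \<Rightarrow> nat \<Rightarrow> nat \<Rightarrow> bool" where
  "E1 n x y \<longleftrightarrow> (x < n-1 \<and> y < n-1 \<and> (y = Suc x \<or> x = Suc y \<or> (x = 0 \<and> y = n-2) \<or> (y = 0 \<and> x = n-2)))
      \<or> (x = n-1 \<and> (y = 0 \<or> y = 3)) \<or> (y = n-1 \<and> (x = 0 \<or> x = 3))"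

lemma E1_sym: "E1 n x y \<Longrightarrow> E1 n y x" by (auto simp: E1_def)

lemma p1_simple: "7 \<le> n \<Longrightarrow> simple_graph {0..<n} (E1 n)"
  by (auto simp: simple_graph_def E1_def)

definition HP :: "nat \<Rightarrow> nat list" where "HP n = [1,2,3,n-1,0] @ rev [4..<n-1]"

lemma HP_succ: "7 \<le> n \<Longrightarrow> successively (E1 n) (HP n)"
proof -
  assume n: "7 \<le> n"
  have a: "successively (E1 n) [1,2,3,n-1,0]" using n unfolding E1_def by simp arith
  have b: "successively (\<lambda>x y. E1 n y x) [4..<n-1]" by (rule succ_upt) (auto simp: E1_def)
  have c: "hd (rev [4..<n-1]) = n - 2" using n by (simp add: hd_rev)
  show ?thesis unfolding HP_def successively_append_iff using a b c n
    by (simp add: E1_def; arith)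
qed

lemma HP_set: "7 \<le> n \<Longrightarrow> set (HP n) = {0..<n}"
  by (auto simp: HP_def)

lemma HP_dist: "7 \<le> n \<Longrightarrow> distinct (HP n)"
  by (auto simp: HP_def)

lemma HP_path: "7 \<le> n \<Longrightarrow> is_path {0..<n} (E1 n) (HP n)"
  using HP_succ HP_set HP_dist by (auto simp: path_succ HP_def)

lemma HP_len: "7 \<le> n \<Longrightarrow> length (HP n) = n"
  using HP_set HP_dist distinct_card by fastforce

lemma C1_cycle: "7 \<le> n \<Longrightarrow> is_cycle {0..<n} (E1 n) [0..<n-1]"
  unfolding is_cycle_def path_succ
  by (auto intro!: succ_upt simp: E1_def last_upt)

definition f1 :: "nat \<Rightarrow> nat \<Rightarrow> nat" where
  "f1 n x = (if x = 1 \<or> x = 2 then 0 else if x = n - 1 then 1 else 2)"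

lemma p1_cycle_bound:
  assumes n: "7 \<le> n" and c: "is_cycle {0..<n} (E1 n) xs" and v: "n - 1 \<in> set xs"
  shows "length xs \<le> n - 2"
proof -
  let ?S = "{0,3::nat}"
  let ?L = "f1 n ` (set xs - ?S)"
  have pres: "f1 n x = f1 n y" if "E1 n x y" "x \<notin> ?S" "y \<notin> ?S" for x y
    using that n by (auto simp: E1_def f1_def)
  have L: "card ?L \<le> max 1 (card (set xs \<inter> ?S))" by (rule labels_cycle[OF c pres])
  have "card (set xs \<inter> ?S) \<le> card ?S" by (rule card_mono) auto
  hence cS: "card (set xs \<inter> ?S) \<le> 2" by simp
  hence L2: "card ?L \<le> 2" using L by simp
  have sub: "set xs \<subseteq> {0..<n}" using c by (auto simp: is_cycle_def is_path_def)
  have vin: "1 \<in> ?L" using v n by (force simp: f1_def)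
  have cls: "card {x\<in>{0..<n}. x \<notin> ?S \<and> f1 n x = l} \<le> n - 5" for l
  proof (cases "l = 0")
    case True
    have "{x\<in>{0..<n}. x \<notin> ?S \<and> f1 n x = l} \<subseteq> {1,2}" using True by (auto simp: f1_def split: if_splits)
    moreover have "card {1,2::nat} \<le> n - 5" using n by simp
    ultimately show ?thesis by (rule card_le_sub) simp
  next
    case l0: False
    show ?thesis
    proof (cases "l = 1")
      case True
      have "{x\<in>{0..<n}. x \<notin> ?S \<and> f1 n x = l} \<subseteq> {n-1}" using True by (auto simp: f1_def split: if_splits)
      moreover have "card {n-1} \<le> n - 5" using n by simp
      ultimately show ?thesis by (rule card_le_sub) simp
    next
      case False
      have "{x\<in>{0..<n}. x \<notin> ?S \<and> f1 n x = l} \<subseteq> {4..<n-1}" using False l0 by (auto simp: f1_def split: if_splits)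
      moreover have "card {4..<n-1} \<le> n - 5" using n by simp
      ultimately show ?thesis by (rule card_le_sub) simp
    qed
  qed
  have cl1: "card {x\<in>{0..<n}. x \<notin> ?S \<and> f1 n x = 1} \<le> 1"
  proof -
    have "{x\<in>{0..<n}. x \<notin> ?S \<and> f1 n x = 1} \<subseteq> {n-1}" by (auto simp: f1_def split: if_splits)
    moreover have "card {n-1} \<le> 1" by simp
    ultimately show ?thesis by (rule card_le_sub) simp
  qed
  have "card (set xs - ?S) \<le> 1 + (n - 5) * (card ?L - 1)"
    by (rule size_bound[OF _ sub vin]) (use cls cl1 in auto)
  also have "\<dots> \<le> 1 + (n - 5)"
  proof -
    have "card ?L - 1 \<le> 1" using L2 by linarith
    then have "(n - 5) * (card ?L - 1) \<le> (n - 5) * 1" by (rule mult_le_mono2)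
    then show ?thesis by simp
  qed
  finally have "card (set xs - ?S) \<le> n - 4" using n by simp
  moreover have "distinct xs" using c by (simp add: is_cycle_def is_path_def)
  ultimately show ?thesis using len_split[of xs ?S] cS n by linarith
qed

lemma p1_conn:
  assumes n: "7 \<le> n"
  shows "k_connected 2 {0..<n} (E1 n)"
  unfolding k_connected_def
proof (intro conjI allI impI)
  show "2 < card {0..<n}" using n by simp
  fix X assume X: "X \<subseteq> {0..<n} \<and> card X < 2"
  have fin: "finite X" using X finite_subset by blast
  have "X = {} \<or> (\<exists>k. X = {k})"
  proof -
    have "card X = 0 \<or> card X = 1" using X by linarith
    then show ?thesis
    proof
      assume "card X = 0" then show ?thesis using fin by simp
    next
      assume "card X = 1"
      then obtain k0 where "X = {k0}" by (rule card_1_singletonE)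
      then show ?thesis by blast
    qed
  qed
  then show "connected_graph ({0..<n} - X) (induced (E1 n) ({0..<n} - X))"
  proof
    assume "X = {}"
    then have st: "set (HP n) = {0..<n} - X" using HP_set[OF n] by simp
    have ne: "HP n \<noteq> []" by (simp add: HP_def)
    show ?thesis by (rule conn_gen[OF HP_succ[OF n] st ne E1_sym])
  next
    assume "\<exists>k. X = {k}"
    then obtain k where k: "X = {k}" by blast
    have kn: "k < n" using X k by auto
    show ?thesis
    proof (cases "k = n - 1")
      case True
      let ?ws = "[0..<n-1]"
      have s: "successively (E1 n) ?ws" by (rule succ_upt) (auto simp: E1_def)
      have st: "set ?ws = {0..<n} - X" using k True n by auto
      show ?thesis by (rule conn_gen[OF s st _ E1_sym]) (use n in simp)
    next
      case kv: False
      show ?thesis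
      proof (cases "k = 0")
        case True
        let ?ws = "[1,2,3,n-1] @ [3..<n-1]"
        have s: "successively (E1 n) ?ws" unfolding successively_append_iff
          using n by (auto intro!: succ_upt simp: E1_def)
        have st: "set ?ws = {0..<n} - X" using k True n by auto
        show ?thesis by (rule conn_gen[OF s st _ E1_sym]) (use n in simp)
      next
        case k0: False
        let ?ws = "[k+1..<n-1] @ [0, n-1] @ [0..<k]"
        have s1: "successively (E1 n) [k+1..<n-1]" by (rule succ_upt) (auto simp: E1_def)
        have s3: "successively (E1 n) [0..<k]" using kv kn by (auto intro!: succ_upt simp: E1_def)
        have s: "successively (E1 n) ?ws" unfolding successively_append_iff
          using s1 s3 n k0 kv kn by (auto simp: E1_def last_upt hd_upt)
        have st: "set ?ws = {0..<n} - X" using k k0 kv kn n by auto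
        show ?thesis by (rule conn_gen[OF s st _ E1_sym]) (use n in simp)
      qed
    qed
  qed
qed

lemma part1:
  assumes n: "7 \<le> n"
  shows "\<exists>(V::nat set) E. simple_graph V E \<and> card V = n \<and>
            k_connected 2 V E \<and> detour_covered V E \<and> \<not> cummerbund_covered V E"
proof (intro exI conjI)
  show "simple_graph {0..<n} (E1 n)" using p1_simple n .
  show "card {0..<n} = n" by simp
  show "k_connected 2 {0..<n} (E1 n)" using p1_conn n .
  show "detour_covered {0..<n} (E1 n)"
    unfolding detour_covered_def
  proof
    fix v assume v: "v \<in> {0..<n}"
    have "is_detour {0..<n} (E1 n) (HP n)"
      unfolding is_detour_def
    proof (intro conjI allI impI)
      show "is_path {0..<n} (E1 n) (HP n)" using HP_path n .
      fix ys assume "is_path {0..<n} (E1 n) ys"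
      then have "distinct ys" "set ys \<subseteq> {0..<n}" by (auto simp: is_path_def)
      then have "card (set ys) \<le> card {0..<n}" by (intro card_mono) auto
      then have "length ys \<le> n" using distinct_card[OF \<open>distinct ys\<close>] by simp
      then show "length ys \<le> length (HP n)" using HP_len n by simp
    qed
    then show "\<exists>xs. is_detour {0..<n} (E1 n) xs \<and> v \<in> set xs" using v HP_set n by blast
  qed
  show "\<not> cummerbund_covered {0..<n} (E1 n)"
  proof
    assume "cummerbund_covered {0..<n} (E1 n)"
    moreover have "n - 1 \<in> {0..<n}" using n by simp
    ultimately obtain xs where xs: "is_cummerbund {0..<n} (E1 n) xs" "n - 1 \<in> set xs"
      unfolding cummerbund_covered_def by blast
    have "\<forall>ys. is_cycle {0..<n} (E1 n) ys \<longrightarrow> length ys \<le> length xs"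
      using xs(1) by (simp add: is_cummerbund_def)
    from this[rule_format, OF C1_cycle[OF n]] have "length [0..<n-1] \<le> length xs" .
    moreover have "length xs \<le> n - 2" using p1_cycle_bound n xs by (auto simp: is_cummerbund_def)
    ultimately show False using n by simp
  qed
qed



definition core2 :: "(nat \<times> nat) list" where
  "core2 = [(1,3),(3,4),(4,0),(1,5),(5,6),(6,0),(2,7),(7,8),(8,0),(2,9),(9,10),(10,0)]"

definition E2 :: "nat \<Rightarrow> nat \<Rightarrow> nat \<Rightarrow> bool" where
  "E2 n x y \<longleftrightarrow> (x,y) \<in> set core2 \<or> (y,x) \<in> set core2 \<or> ((x = 1 \<or> x = 2) \<and> 11 \<le> y \<and> y < n)
     \<or> ((y = 1 \<or> y = 2) \<and> 11 \<le> x \<and> x < n)"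

lemma E2_sym: "E2 n x y \<Longrightarrow> E2 n y x" by (auto simp: E2_def)

lemma p2_simple: "12 \<le> n \<Longrightarrow> simple_graph {0..<n} (E2 n)"
  by (auto simp: simple_graph_def E2_def core2_def)

lemma lt11: "(u::nat) < 11 \<longleftrightarrow> u \<in> {0,1,2,3,4,5,6,7,8,9,10}"
  by (auto; presburger)

lemma p2_conn_aux:
  assumes n: "12 \<le> n" and s: "successively (E2 n) ws" and c1: "\<forall>x\<in>{0,1,2,3,4,5,6,7,8,9,10::nat}. x \<notin> X \<longrightarrow> x \<in> set ws"
    and c2: "set ws \<subseteq> {0..<n} - X" and ne: "ws \<noteq> []" and X: "X \<subseteq> {k}"
  shows "connected_graph ({0..<n} - X) (induced (E2 n) ({0..<n} - X))"
proof (rule conn_star[where ws=ws])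
  show "successively (induced (E2 n) ({0..<n} - X)) ws" using s c2 by (rule succ_induced)
  show "set ws \<subseteq> {0..<n} - X" using c2 .
  show "ws \<noteq> []" using ne .
  show "E2 n x y \<Longrightarrow> E2 n y x" for x y by (rule E2_sym)
  fix u assume u: "u \<in> {0..<n} - X"
  show "u \<in> set ws \<or> (\<exists>w\<in>set ws. E2 n u w)"
  proof (cases "u < 11")
    case True
    then have "u \<in> {0,1,2,3,4,5,6,7,8,9,10::nat}" by (simp only: lt11)
    then show ?thesis using u c1 by blast
  next
    case False
    show ?thesis
    proof (cases "1 \<in> X")
      case True
      then have "k = 1" using X by auto
      then have "2 \<notin> X" using X by auto
      then have "2 \<in> set ws" using c1 by simp
      moreover have "E2 n u 2" using False u by (auto simp: E2_def)
      ultimately show ?thesis by blast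
    next
      case f: False
      then have "1 \<in> set ws" using c1 by simp
      moreover have "E2 n u 1" using False u by (auto simp: E2_def)
      ultimately show ?thesis by blast
    qed
  qed
qed

lemma p2_conn:
  assumes n: "12 \<le> n"
  shows "k_connected 2 {0..<n} (E2 n)"
  unfolding k_connected_def
proof (intro conjI allI impI)
  show "2 < card {0..<n}" using n by simp
  fix X assume X: "X \<subseteq> {0..<n} \<and> card X < 2"
  have fin: "finite X" using X finite_subset by blast
  have "X = {} \<or> (\<exists>k. X = {k})"
  proof -
    have "card X = 0 \<or> card X = 1" using X by linarith
    then show ?thesis
    proof
      assume "card X = 0" then show ?thesis using fin by simp
    next
      assume "card X = 1"
      then obtain k0 where "X = {k0}" by (rule card_1_singletonE)
      then show ?thesis by blast
    qed
  qed
  then obtain k where Xk: "X \<subseteq> {k}" "X = {} \<or> X = {k}"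
  proof
    assume "X = {}"
    then show ?thesis using that[of 0] by simp
  next
    assume "\<exists>k. X = {k}"
    then obtain k where "X = {k}" by blast
    then show ?thesis using that[of k] by simp
  qed
  have w0: "connected_graph ({0..<n} - X) (induced (E2 n) ({0..<n} - X))" if "\<not> k < 11 \<or> X = {}"
  proof -
    have s: "successively (E2 n) [1,3,4,0,8,7,2,9,10,0,6,5,1]" by (simp add: E2_def core2_def)
    have c1: "\<forall>x\<in>{0,1,2,3,4,5,6,7,8,9,10::nat}. x \<notin> X \<longrightarrow> x \<in> set [1,3,4,0,8,7,2,9,10,0,6,5,1::nat]" by simp
    have c2: "set [1,3,4,0,8,7,2,9,10,0,6,5,1::nat] \<subseteq> {0..<n} - X"
    proof (cases "X = {}")
      case True then show ?thesis using n by simp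
    next
      case False
      then have "X = {k}" "\<not> k < 11" using that Xk by auto
      then show ?thesis using n by auto
    qed
    show ?thesis by (rule p2_conn_aux[OF n s c1 c2 _ Xk(1)]) simp
  qed
  show "connected_graph ({0..<n} - X) (induced (E2 n) ({0..<n} - X))"
  proof (cases "\<not> k < 11 \<or> X = {}")
    case True then show ?thesis using w0 by blast
  next
    case False
    then have Xe: "X = {k}" and kk: "k < 11" using Xk by auto
    have "k = 0 \<or> k = 1 \<or> k = 2 \<or> k = 3 \<or> k = 4 \<or> k = 5 \<or> k = 6 \<or> k = 7 \<or> k = 8 \<or> k = 9 \<or> k = 10"
      using kk by arith
    then show ?thesis
    proof (elim disjE)
      assume k: "k = 0"
      have s: "successively (E2 n) [4,3,1,5,6,5,1,11,2,7,8,7,2,9,10]" using n by (simp add: E2_def core2_def)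
      have c1: "\<forall>x\<in>{0,1,2,3,4,5,6,7,8,9,10::nat}. x \<notin> X \<longrightarrow> x \<in> set [4,3,1,5,6,5,1,11,2,7,8,7,2,9,10]" using Xe k by simp
      have c2: "set [4,3,1,5,6,5,1,11,2,7,8,7,2,9,10] \<subseteq> {0..<n} - X" using Xe k n by simp
      have X': "X \<subseteq> {k}" using Xe by simp
      show ?thesis by (rule p2_conn_aux[OF n s c1 c2 _ X']) simp
    next
      assume k: "k = 1"
      have s: "successively (E2 n) [3,4,0,6,5,6,0,8,7,2,9,10,0]" using n by (simp add: E2_def core2_def)
      have c1: "\<forall>x\<in>{0,1,2,3,4,5,6,7,8,9,10::nat}. x \<notin> X \<longrightarrow> x \<in> set [3,4,0,6,5,6,0,8,7,2,9,10,0]" using Xe k by simp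
      have c2: "set [3,4,0,6,5,6,0,8,7,2,9,10,0] \<subseteq> {0..<n} - X" using Xe k n by simp
      have X': "X \<subseteq> {k}" using Xe by simp
      show ?thesis by (rule p2_conn_aux[OF n s c1 c2 _ X']) simp
    next
      assume k: "k = 2"
      have s: "successively (E2 n) [7,8,0,10,9,10,0,4,3,1,5,6,0]" using n by (simp add: E2_def core2_def)
      have c1: "\<forall>x\<in>{0,1,2,3,4,5,6,7,8,9,10::nat}. x \<notin> X \<longrightarrow> x \<in> set [7,8,0,10,9,10,0,4,3,1,5,6,0]" using Xe k by simp
      have c2: "set [7,8,0,10,9,10,0,4,3,1,5,6,0] \<subseteq> {0..<n} - X" using Xe k n by simp
      have X': "X \<subseteq> {k}" using Xe by simp
      show ?thesis by (rule p2_conn_aux[OF n s c1 c2 _ X']) simp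
    next
      assume k: "k = 3"
      have s: "successively (E2 n) [4,0,6,5,1,11,2,7,8,0,10,9,2]" using n by (simp add: E2_def core2_def)
      have c1: "\<forall>x\<in>{0,1,2,3,4,5,6,7,8,9,10::nat}. x \<notin> X \<longrightarrow> x \<in> set [4,0,6,5,1,11,2,7,8,0,10,9,2]" using Xe k by simp
      have c2: "set [4,0,6,5,1,11,2,7,8,0,10,9,2] \<subseteq> {0..<n} - X" using Xe k n by simp
      have X': "X \<subseteq> {k}" using Xe by simp
      show ?thesis by (rule p2_conn_aux[OF n s c1 c2 _ X']) simp
    next
      assume k: "k = 4"
      have s: "successively (E2 n) [3,1,5,6,0,8,7,2,9,10]" using n by (simp add: E2_def core2_def)
      have c1: "\<forall>x\<in>{0,1,2,3,4,5,6,7,8,9,10::nat}. x \<notin> X \<longrightarrow> x \<in> set [3,1,5,6,0,8,7,2,9,10]" using Xe k by simp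
      have c2: "set [3,1,5,6,0,8,7,2,9,10] \<subseteq> {0..<n} - X" using Xe k n by simp
      have X': "X \<subseteq> {k}" using Xe by simp
      show ?thesis by (rule p2_conn_aux[OF n s c1 c2 _ X']) simp
    next
      assume k: "k = 5"
      have s: "successively (E2 n) [1,3,4,0,6,0,8,7,2,9,10]" using n by (simp add: E2_def core2_def)
      have c1: "\<forall>x\<in>{0,1,2,3,4,5,6,7,8,9,10::nat}. x \<notin> X \<longrightarrow> x \<in> set [1,3,4,0,6,0,8,7,2,9,10]" using Xe k by simp
      have c2: "set [1,3,4,0,6,0,8,7,2,9,10] \<subseteq> {0..<n} - X" using Xe k n by simp
      have X': "X \<subseteq> {k}" using Xe by simp
      show ?thesis by (rule p2_conn_aux[OF n s c1 c2 _ X']) simp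
    next
      assume k: "k = 6"
      have s: "successively (E2 n) [5,1,3,4,0,8,7,2,9,10]" using n by (simp add: E2_def core2_def)
      have c1: "\<forall>x\<in>{0,1,2,3,4,5,6,7,8,9,10::nat}. x \<notin> X \<longrightarrow> x \<in> set [5,1,3,4,0,8,7,2,9,10]" using Xe k by simp
      have c2: "set [5,1,3,4,0,8,7,2,9,10] \<subseteq> {0..<n} - X" using Xe k n by simp
      have X': "X \<subseteq> {k}" using Xe by simp
      show ?thesis by (rule p2_conn_aux[OF n s c1 c2 _ X']) simp
    next
      assume k: "k = 7"
      have s: "successively (E2 n) [8,0,4,3,1,5,6,0,10,9,2]" using n by (simp add: E2_def core2_def)
      have c1: "\<forall>x\<in>{0,1,2,3,4,5,6,7,8,9,10::nat}. x \<notin> X \<longrightarrow> x \<in> set [8,0,4,3,1,5,6,0,10,9,2]" using Xe k by simp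
      have c2: "set [8,0,4,3,1,5,6,0,10,9,2] \<subseteq> {0..<n} - X" using Xe k n by simp
      have X': "X \<subseteq> {k}" using Xe by simp
      show ?thesis by (rule p2_conn_aux[OF n s c1 c2 _ X']) simp
    next
      assume k: "k = 8"
      have s: "successively (E2 n) [7,2,9,10,0,4,3,1,5,6]" using n by (simp add: E2_def core2_def)
      have c1: "\<forall>x\<in>{0,1,2,3,4,5,6,7,8,9,10::nat}. x \<notin> X \<longrightarrow> x \<in> set [7,2,9,10,0,4,3,1,5,6]" using Xe k by simp
      have c2: "set [7,2,9,10,0,4,3,1,5,6] \<subseteq> {0..<n} - X" using Xe k n by simp
      have X': "X \<subseteq> {k}" using Xe by simp
      show ?thesis by (rule p2_conn_aux[OF n s c1 c2 _ X']) simp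
    next
      assume k: "k = 9"
      have s: "successively (E2 n) [10,0,4,3,1,5,6,0,8,7,2]" using n by (simp add: E2_def core2_def)
      have c1: "\<forall>x\<in>{0,1,2,3,4,5,6,7,8,9,10::nat}. x \<notin> X \<longrightarrow> x \<in> set [10,0,4,3,1,5,6,0,8,7,2]" using Xe k by simp
      have c2: "set [10,0,4,3,1,5,6,0,8,7,2] \<subseteq> {0..<n} - X" using Xe k n by simp
      have X': "X \<subseteq> {k}" using Xe by simp
      show ?thesis by (rule p2_conn_aux[OF n s c1 c2 _ X']) simp
    next
      assume k: "k = 10"
      have s: "successively (E2 n) [9,2,7,8,0,4,3,1,5,6]" using n by (simp add: E2_def core2_def)
      have c1: "\<forall>x\<in>{0,1,2,3,4,5,6,7,8,9,10::nat}. x \<notin> X \<longrightarrow> x \<in> set [9,2,7,8,0,4,3,1,5,6]" using Xe k by simp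
      have c2: "set [9,2,7,8,0,4,3,1,5,6] \<subseteq> {0..<n} - X" using Xe k n by simp
      have X': "X \<subseteq> {k}" using Xe by simp
      show ?thesis by (rule p2_conn_aux[OF n s c1 c2 _ X']) simp
    qed
  qed
qed

definition f2a :: "nat \<Rightarrow> nat" where
  "f2a x = (if x = 3 \<or> x = 4 then 0 else if x = 5 \<or> x = 6 then 1 else if x = 7 \<or> x = 8 then 2
            else if x = 9 \<or> x = 10 then 3 else x)"

definition f2b :: "nat \<Rightarrow> nat" where
  "f2b x = (if x = 1 \<or> x = 3 \<or> x = 4 \<or> x = 5 \<or> x = 6 then 0 else 1)"

lemma pres2a: "E2 n x y \<Longrightarrow> x \<notin> {0,1,2} \<Longrightarrow> y \<notin> {0,1,2} \<Longrightarrow> f2a x = f2a y"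
  by (auto simp: E2_def core2_def f2a_def)

lemma pres2b: "E2 n x y \<Longrightarrow> x \<notin> {x. x = 0 \<or> 11 \<le> x} \<Longrightarrow> y \<notin> {x. x = 0 \<or> 11 \<le> x} \<Longrightarrow> f2b x = f2b y"
  by (auto simp: E2_def core2_def f2b_def)

lemma cls2a: "card {x\<in>{0..<n}. x \<notin> {0,1,2} \<and> f2a x = l} \<le> 2"
proof -
  have "{x\<in>{0..<n}. x \<notin> {0,1,2} \<and> f2a x = l} \<subseteq>
     (if l = 0 then {3,4} else if l = 1 then {5,6} else if l = 2 then {7,8} else if l = 3 then {9,10} else {l})"
    by (auto simp: f2a_def split: if_splits)
  moreover have "card (if l = 0 then {3,4} else if l = 1 then {5,6} else if l = 2 then {7,8} else if l = 3 then {9,10} else {l::nat}) \<le> 2"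
    by simp
  ultimately show ?thesis by (rule card_le_sub) simp
qed

lemma cls2a1: "11 \<le> w \<Longrightarrow> card {x\<in>{0..<n}. x \<notin> {0,1,2} \<and> f2a x = f2a w} \<le> 1"
proof -
  assume w: "11 \<le> w"
  have "{x\<in>{0..<n}. x \<notin> {0,1,2} \<and> f2a x = f2a w} \<subseteq> {w}"
    using w by (auto simp: f2a_def split: if_splits)
  moreover have "card {w} \<le> 1" by simp
  ultimately show ?thesis by (rule card_le_sub) simp
qed

lemma cls2b: "card {x\<in>{0..<n}. x \<notin> {x. x = 0 \<or> 11 \<le> x} \<and> f2b x = l} \<le> 5"
proof -
  have "{x\<in>{0..<n}. x \<notin> {x. x = 0 \<or> 11 \<le> x} \<and> f2b x = l} \<subseteq>
     (if l = 0 then {1,3,4,5,6} else {2,7,8,9,10})"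
  proof
    fix x assume x: "x \<in> {x\<in>{0..<n}. x \<notin> {x. x = 0 \<or> 11 \<le> x} \<and> f2b x = l}"
    then have "0 < x" "x < 11" by auto
    then have "x = 1 \<or> x = 2 \<or> x = 3 \<or> x = 4 \<or> x = 5 \<or> x = 6 \<or> x = 7 \<or> x = 8 \<or> x = 9 \<or> x = 10"
      by arith
    then show "x \<in> (if l = 0 then {1,3,4,5,6} else {2,7,8,9,10})" using x by (elim disjE) (auto simp: f2b_def)
  qed
  moreover have "card (if l = 0 then {1,3,4,5,6} else {2,7,8,9,10::nat}) \<le> 5"
    by simp
  ultimately show ?thesis by (rule card_le_sub) simp
qed

lemma card3: "card (A \<inter> {0,1,2::nat}) \<le> 3"
proof -
  have "card (A \<inter> {0,1,2::nat}) \<le> card {0,1,2::nat}" by (rule card_mono) auto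
  then show ?thesis by simp
qed

lemma mult2_le: "(c::nat) \<le> m \<Longrightarrow> 2 * (c - 1) \<le> 2 * (m - 1)" by simp

lemma p2_cycle_bound:
  assumes n: "12 \<le> n" and c: "is_cycle {0..<n} (E2 n) xs"
  shows "length xs \<le> 8"
proof -
  have sub: "set xs \<subseteq> {0..<n}" and dis: "distinct xs" using c by (auto simp: is_cycle_def is_path_def)
  show ?thesis
  proof (cases "\<exists>w\<in>set xs. 11 \<le> w")
    case True
    then obtain w where w: "w \<in> set xs" "11 \<le> w" by blast
    let ?S = "{0,1,2::nat}"
    let ?L = "f2a ` (set xs - ?S)"
    have L: "card ?L \<le> max 1 (card (set xs \<inter> ?S))" by (rule labels_cycle[OF c pres2a])
    have cS: "card (set xs \<inter> ?S) \<le> 3" by (rule card3)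
    have L3: "card ?L \<le> 3" using L cS by simp
    have win: "f2a w \<in> ?L" using w by auto
    have "card (set xs - ?S) \<le> 1 + 2 * (card ?L - 1)"
      by (rule size_bound[OF _ sub win]) (use cls2a cls2a1[OF w(2)] in auto)
    also have "\<dots> \<le> 1 + 2 * (3 - 1)" using L3 by simp
    finally have "card (set xs - ?S) \<le> 5" by simp
    then show ?thesis using len_split[OF dis, of ?S] cS by linarith
  next
    case False
    let ?S = "{x. x = 0 \<or> 11 \<le> (x::nat)}"
    let ?L = "f2b ` (set xs - ?S)"
    have L: "card ?L \<le> max 1 (card (set xs \<inter> ?S))" by (rule labels_cycle[OF c pres2b])
    have "set xs \<inter> ?S \<subseteq> {0}" using False by auto
    then have cS: "card (set xs \<inter> ?S) \<le> 1" by (rule card_le_sub) simp_all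
    have L1: "card ?L \<le> 1" using L cS by simp
    have "card (set xs - ?S) \<le> 5"
    proof (cases "set xs - ?S = {}")
      case True then show ?thesis by (simp only: True card.empty)
    next
      case False
      then obtain u where u: "u \<in> set xs - ?S" by blast
      have uin: "f2b u \<in> ?L" using u by blast
      have "card (set xs - ?S) \<le> 5 + 5 * (card ?L - 1)"
        by (rule size_bound[OF _ sub uin]) (use cls2b in auto)
      then show ?thesis using L1 by simp
    qed
    then show ?thesis using len_split[OF dis, of ?S] cS by linarith
  qed
qed

lemma p2_path_bound:
  assumes n: "12 \<le> n" and c: "is_path {0..<n} (E2 n) xs" and w: "11 \<in> set xs"
  shows "length xs \<le> 10"
proof -
  have sub: "set xs \<subseteq> {0..<n}" and dis: "distinct xs" using c by (auto simp: is_path_def)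
  let ?S = "{0,1,2::nat}"
  let ?L = "f2a ` (set xs - ?S)"
  have L: "card ?L \<le> card (set xs \<inter> ?S) + 1" by (rule labels_path'[OF c pres2a])
  have cS: "card (set xs \<inter> ?S) \<le> 3" by (rule card3)
  have L4: "card ?L \<le> 4" using L cS by simp
  have win: "f2a 11 \<in> ?L" using w by auto
  have "card (set xs - ?S) \<le> 1 + 2 * (card ?L - 1)"
    by (rule size_bound[OF _ sub win]) (use cls2a cls2a1[of 11] in auto)
  also have "\<dots> \<le> 1 + 2 * (4 - 1)" using L4 by simp
  finally have "card (set xs - ?S) \<le> 7" by simp
  then show ?thesis using len_split[OF dis, of ?S] cS by linarith
qed

definition CA :: "nat \<Rightarrow> nat list" where "CA w = [0,4,3,1,w,2,7,8]"
definition CB :: "nat \<Rightarrow> nat list" where "CB w = [0,6,5,1,w,2,9,10]"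

lemma lenCA: "length (CA w) = 8" by (simp add: CA_def)
lemma lenCB: "length (CB w) = 8" by (simp add: CB_def)

lemma CA_cyc: "11 \<le> w \<Longrightarrow> w < n \<Longrightarrow> is_cycle {0..<n} (E2 n) (CA w)"
  by (auto simp: is_cycle_def path_succ CA_def E2_def core2_def)

lemma CB_cyc: "11 \<le> w \<Longrightarrow> w < n \<Longrightarrow> is_cycle {0..<n} (E2 n) (CB w)"
  by (auto simp: is_cycle_def path_succ CB_def E2_def core2_def)

lemma P11: "12 \<le> n \<Longrightarrow> is_path {0..<n} (E2 n) [4,3,1,5,6,0,10,9,2,7,8]"
  by (auto simp: path_succ E2_def core2_def)

lemma part2:
  assumes n: "12 \<le> n"
  shows "\<exists>(V::nat set) E. simple_graph V E \<and> card V = n \<and>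
            k_connected 2 V E \<and> cummerbund_covered V E \<and> \<not> detour_covered V E"
proof (intro exI conjI)
  show "simple_graph {0..<n} (E2 n)" using p2_simple n .
  show "card {0..<n} = n" by simp
  show "k_connected 2 {0..<n} (E2 n)" using p2_conn n .
  have cumA: "is_cummerbund {0..<n} (E2 n) (CA w)" if "11 \<le> w" "w < n" for w
    using CA_cyc[OF that] p2_cycle_bound[OF n] by (auto simp: is_cummerbund_def lenCA)
  have cumB: "is_cummerbund {0..<n} (E2 n) (CB w)" if "11 \<le> w" "w < n" for w
    using CB_cyc[OF that] p2_cycle_bound[OF n] by (auto simp: is_cummerbund_def lenCB)
  show "cummerbund_covered {0..<n} (E2 n)"
    unfolding cummerbund_covered_def
  proof
    fix u assume u: "u \<in> {0..<n}"
    show "\<exists>xs. is_cummerbund {0..<n} (E2 n) xs \<and> u \<in> set xs"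
    proof (cases "11 \<le> u")
      case True then show ?thesis using cumA[of u] u by (auto simp: CA_def)
    next
      case False
      have "u = 0 \<or> u = 1 \<or> u = 2 \<or> u = 3 \<or> u = 4 \<or> u = 5 \<or> u = 6 \<or> u = 7 \<or> u = 8 \<or> u = 9 \<or> u = 10"
        using False by arith
      then have "u \<in> set (CA 11) \<or> u \<in> set (CB 11)" by (elim disjE) (simp_all add: CA_def CB_def)
      then show ?thesis using cumA[of 11] cumB[of 11] n by auto
    qed
  qed
  show "\<not> detour_covered {0..<n} (E2 n)"
  proof
    assume "detour_covered {0..<n} (E2 n)"
    moreover have "11 \<in> {0..<n}" using n by simp
    ultimately obtain xs where xs: "is_detour {0..<n} (E2 n) xs" "11 \<in> set xs"
      unfolding detour_covered_def by blast
    have "\<forall>ys. is_path {0..<n} (E2 n) ys \<longrightarrow> length ys \<le> length xs"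
      using xs(1) by (simp add: is_detour_def)
    from this[rule_format, OF P11[OF n]] have "11 \<le> length xs" by simp
    moreover have "length xs \<le> 10" using p2_path_bound[OF n _ xs(2)] xs(1) by (simp add: is_detour_def)
    ultimately show False by simp
  qed
qed


theorem theorem1:
  shows "(\<forall>n::nat. n \<ge> 7 \<longrightarrow> (\<exists>(V::nat set) E. simple_graph V E \<and> card V = n \<and>
            k_connected 2 V E \<and> detour_covered V E \<and> \<not> cummerbund_covered V E))
       \<and> (\<forall>n::nat. n \<ge> 12 \<longrightarrow> (\<exists>(V::nat set) E. simple_graph V E \<and> card V = n \<and>
            k_connected 2 V E \<and> cummerbund_covered V E \<and> \<not> detour_covered V E))"
  using part1 part2 by blast

end
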